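(* Let $\hat{x}$ be the final value of the vector $x$ in Algorithm 1 and let $OPT$ be a set maximizing $f$ among subsets of $N$ of size at most $k$. If $\|\hat{x}\|_1<k$, then $F(\hat{x}+\mathbf{1}_{OPT\setminus\mathrm{supp}(\hat{x})})\le F(\hat{x})+c\tau$.
   Context: Setting: finite ground set $N$ whose elements arrive one at a time in a stream, non-negative submodular $f\colon 2^N\to\mathbb{R}_{\ge 0}$, positive integer $k$. $\mathbf{1}_A$ is the characteristic vector of $A$. $F$ is the multilinear extension of $f$: $F(x)=\sum_{A\subseteq N} f(A)\prod_{u\in A}x_u\prod_{u\notin A}(1-x_u)$ for $x\in[0,1]^N$, and $\partial_uF(x)=F(x\vee \mathbf{1}_u)-F(x\wedge\mathbf{1}_{N\setminus\{u\}})$ (coordinatewise max/min). $\mathrm{supp}(x)=\{u: x_u>0\}$. Algorithm 1 has parameters $p\in(0,1)$, $c>0$, $\alpha\in(0,1]$ and a number $\tau$. It starts with $x=\mathbf{0}$, and when an element $u$ arrives, if $\partial_uF(x)\ge c\tau/k$ it sets $x\leftarrow x+\min\{p,\,k-\|x\|_1\}\cdot\mathbf{1}_u$ (otherwise $x$ is unchanged). After the stream ends, it computes a random set $S_1$ with $|S_1|\le k$ and $\mathbb{E}[f(S_1)]\ge F(x)$, and a random set $S_2\subseteq\mathrm{supp}(x)$ with $|S_2|\le k$ and $\mathbb{E}[f(S_2)]\ge\alpha\cdot\max_{S\subseteq\mathrm{supp}(x),|S|\le k}f(S)$, and outputs the better of $S_1,S_2$. *)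

theory Defs
  imports Complex_Main "HOL-Library.Indicator_Function"
begin

definition submodular_on :: "'a set \<Rightarrow> ('a set \<Rightarrow> real) \<Rightarrow> bool" where
  "submodular_on N f \<longleftrightarrow>
     (\<forall>A B. A \<subseteq> N \<longrightarrow> B \<subseteq> N \<longrightarrow> f (A \<union> B) + f (A \<inter> B) \<le> f A + f B)"

definition multilinear_ext :: "'a set \<Rightarrow> ('a set \<Rightarrow> real) \<Rightarrow> ('a \<Rightarrow> real) \<Rightarrow> real" where
  "multilinear_ext N f x =
     (\<Sum>A\<in>Pow N. f A * (\<Prod>u\<in>A. x u) * (\<Prod>u\<in>N - A. 1 - x u))"

definition partial_F :: "'a set \<Rightarrow> ('a set \<Rightarrow> real) \<Rightarrow> ('a \<Rightarrow> real) \<Rightarrow> 'a \<Rightarrow> real" where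
  "partial_F N f x u =
     multilinear_ext N f (sup x (indicator {u})) - multilinear_ext N f (inf x (indicator (N - {u})))"

definition norm1 :: "'a set \<Rightarrow> ('a \<Rightarrow> real) \<Rightarrow> real" where
  "norm1 N x = (\<Sum>u\<in>N. \<bar>x u\<bar>)"

definition supp :: "'a set \<Rightarrow> ('a \<Rightarrow> real) \<Rightarrow> 'a set" where
  "supp N x = {u \<in> N. x u > 0}"

definition alg1_step :: "'a set \<Rightarrow> ('a set \<Rightarrow> real) \<Rightarrow> nat \<Rightarrow> real \<Rightarrow> real \<Rightarrow> real
    \<Rightarrow> ('a \<Rightarrow> real) \<Rightarrow> 'a \<Rightarrow> ('a \<Rightarrow> real)" where
  "alg1_step N f k p c \<tau> x u =
     (if partial_F N f x u \<ge> c * \<tau> / real k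
      then (\<lambda>v. x v + min p (real k - norm1 N x) * indicator {u} v)
      else x)"

definition alg1_x :: "'a set \<Rightarrow> ('a set \<Rightarrow> real) \<Rightarrow> nat \<Rightarrow> real \<Rightarrow> real \<Rightarrow> real
    \<Rightarrow> 'a list \<Rightarrow> ('a \<Rightarrow> real)" where
  "alg1_x N f k p c \<tau> stream = foldl (alg1_step N f k p c \<tau>) (\<lambda>_. 0) stream"

end

theory Submission
  imports Defs
begin

lemma ml_cong:
  assumes "\<And>u. u \<in> N \<Longrightarrow> x u = y u"
  shows "multilinear_ext N f x = multilinear_ext N f y"
  unfolding multilinear_ext_def
proof (rule sum.cong[OF refl])
  fix A assume "A \<in> Pow N"
  then have "A \<subseteq> N" by auto
  then show "f A * prod x A * (\<Prod>u\<in>N - A. 1 - x u) = f A * prod y A * (\<Prod>u\<in>N - A. 1 - y u)"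
  proof -
    have 1: "prod x A = prod y A" by (rule prod.cong) (use \<open>A \<subseteq> N\<close> assms in auto)
    have 2: "(\<Prod>u\<in>N - A. 1 - x u) = (\<Prod>u\<in>N - A. 1 - y u)" by (rule prod.cong) (use assms in auto)
    show ?thesis unfolding 1 2 ..
  qed
qed

lemma ml_insert:
  assumes "finite M" "v \<notin> M"
  shows "multilinear_ext (insert v M) f x =
         multilinear_ext M (\<lambda>A. (1 - x v) * f A + x v * f (insert v A)) x"
proof -
  have inj: "inj_on (insert v) (Pow M)"
  proof (rule inj_onI)
    fix A B assume AB: "A \<in> Pow M" "B \<in> Pow M" "insert v A = insert v B"
    then have "v \<notin> A" "v \<notin> B" using assms(2) by auto
    then show "A = B" using AB(3) by (metis Diff_insert_absorb)
  qed
  have disj: "Pow M \<inter> insert v ` Pow M = {}" using assms(2) by auto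
  have fin: "finite (Pow M)" using assms(1) by simp
  have "multilinear_ext (insert v M) f x =
     (\<Sum>A\<in>Pow M \<union> insert v ` Pow M. f A * (\<Prod>u\<in>A. x u) * (\<Prod>u\<in>insert v M - A. 1 - x u))"
    unfolding multilinear_ext_def Pow_insert ..
  also have "\<dots> = (\<Sum>A\<in>Pow M. f A * (\<Prod>u\<in>A. x u) * (\<Prod>u\<in>insert v M - A. 1 - x u)) +
     (\<Sum>A\<in>insert v ` Pow M. f A * (\<Prod>u\<in>A. x u) * (\<Prod>u\<in>insert v M - A. 1 - x u))"
    by (rule sum.union_disjoint) (simp_all add: fin disj assms(1))
  also have "(\<Sum>A\<in>insert v ` Pow M. f A * (\<Prod>u\<in>A. x u) * (\<Prod>u\<in>insert v M - A. 1 - x u))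
     = (\<Sum>A\<in>Pow M. f (insert v A) * (\<Prod>u\<in>insert v A. x u) * (\<Prod>u\<in>insert v M - insert v A. 1 - x u))"
    by (rule sum.reindex[OF inj, unfolded comp_def])
  also have "\<dots> = (\<Sum>A\<in>Pow M. x v * f (insert v A) * (\<Prod>u\<in>A. x u) * (\<Prod>u\<in>M - A. 1 - x u))"
  proof (rule sum.cong[OF refl])
    fix A assume "A \<in> Pow M"
    then have A: "A \<subseteq> M" "finite A" using assms(1) finite_subset by auto
    have "v \<notin> A" using A assms(2) by auto
    then have "(\<Prod>u\<in>insert v A. x u) = x v * (\<Prod>u\<in>A. x u)" using A by simp
    moreover have "insert v M - insert v A = M - A" using assms(2) by auto
    ultimately show "f (insert v A) * (\<Prod>u\<in>insert v A. x u) * (\<Prod>u\<in>insert v M - insert v A. 1 - x u)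
       = x v * f (insert v A) * (\<Prod>u\<in>A. x u) * (\<Prod>u\<in>M - A. 1 - x u)" by simp
  qed
  also have "(\<Sum>A\<in>Pow M. f A * (\<Prod>u\<in>A. x u) * (\<Prod>u\<in>insert v M - A. 1 - x u))
     = (\<Sum>A\<in>Pow M. (1 - x v) * f A * (\<Prod>u\<in>A. x u) * (\<Prod>u\<in>M - A. 1 - x u))"
  proof (rule sum.cong[OF refl])
    fix A assume "A \<in> Pow M"
    then have A: "A \<subseteq> M" using assms(1) finite_subset by auto
    have "insert v M - A = insert v (M - A)" "v \<notin> M - A" using A assms(2) by auto
    moreover have "finite (M - A)" using assms(1) by simp
    ultimately show "f A * (\<Prod>u\<in>A. x u) * (\<Prod>u\<in>insert v M - A. 1 - x u)
       = (1 - x v) * f A * (\<Prod>u\<in>A. x u) * (\<Prod>u\<in>M - A. 1 - x u)" by simp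
  qed
  also have "(\<Sum>A\<in>Pow M. (1 - x v) * f A * (\<Prod>u\<in>A. x u) * (\<Prod>u\<in>M - A. 1 - x u)) +
      (\<Sum>A\<in>Pow M. x v * f (insert v A) * (\<Prod>u\<in>A. x u) * (\<Prod>u\<in>M - A. 1 - x u))
    = (\<Sum>A\<in>Pow M. ((1 - x v) * f A + x v * f (insert v A)) * (\<Prod>u\<in>A. x u) * (\<Prod>u\<in>M - A. 1 - x u))"
    unfolding sum.distrib[symmetric] by (rule sum.cong[OF refl]) (simp only: distrib_right)
  finally show ?thesis unfolding multilinear_ext_def .
qed

lemma ml_diff:
  "multilinear_ext N g x - multilinear_ext N h x = multilinear_ext N (\<lambda>A. g A - h A) x"
  unfolding multilinear_ext_def by (simp add: sum_subtractf[symmetric] algebra_simps)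

lemma ml_fmono:
  assumes "\<And>A. A \<subseteq> N \<Longrightarrow> g A \<le> h A" "\<And>w. w \<in> N \<Longrightarrow> 0 \<le> x w \<and> x w \<le> 1"
  shows "multilinear_ext N g x \<le> multilinear_ext N h x"
  unfolding multilinear_ext_def
proof (rule sum_mono)
  fix A assume A: "A \<in> Pow N"
  have "0 \<le> (\<Prod>u\<in>A. x u) * (\<Prod>u\<in>N - A. 1 - x u)"
    using A assms(2) by (intro mult_nonneg_nonneg prod_nonneg) auto
  then have "g A * ((\<Prod>u\<in>A. x u) * (\<Prod>u\<in>N - A. 1 - x u)) \<le> h A * ((\<Prod>u\<in>A. x u) * (\<Prod>u\<in>N - A. 1 - x u))"
    using A assms(1) by (intro mult_right_mono) auto
  then show "g A * prod x A * (\<Prod>u\<in>N - A. 1 - x u) \<le> h A * prod x A * (\<Prod>u\<in>N - A. 1 - x u)"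
    by (simp add: mult.assoc)
qed

lemma ml_anti:
  assumes "finite (M::'a set)"
  shows "\<forall>h::'a set \<Rightarrow> real. (\<forall>A B. A \<subseteq> B \<longrightarrow> B \<subseteq> M \<longrightarrow> h B \<le> h A) \<longrightarrow>
     (\<forall>x y::'a \<Rightarrow> real. (\<forall>w\<in>M. 0 \<le> x w \<and> x w \<le> y w \<and> y w \<le> 1) \<longrightarrow> multilinear_ext M h y \<le> multilinear_ext M h x)"
  using assms
proof (induction M rule: finite_induct)
  case empty
  then show ?case by (simp add: multilinear_ext_def)
next
  case (insert v M)
  show ?case
  proof (intro allI impI)
    fix h :: "'a set \<Rightarrow> real" and x y :: "'a \<Rightarrow> real"
    assume anti: "\<forall>A B. A \<subseteq> B \<longrightarrow> B \<subseteq> insert v M \<longrightarrow> h B \<le> h A"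
      and xy: "\<forall>w\<in>insert v M. 0 \<le> x w \<and> x w \<le> y w \<and> y w \<le> 1"
    define hy where "hy = (\<lambda>A. (1 - y v) * h A + y v * h (insert v A))"
    define hx where "hx = (\<lambda>A. (1 - x v) * h A + x v * h (insert v A))"
    have v: "0 \<le> x v" "x v \<le> y v" "y v \<le> 1" using xy by auto
    have "\<forall>A B. A \<subseteq> B \<longrightarrow> B \<subseteq> M \<longrightarrow> hy B \<le> hy A"
    proof (intro allI impI)
      fix A B assume AB: "A \<subseteq> B" "B \<subseteq> M"
      have "h B \<le> h A" using anti AB by auto
      moreover have "h (insert v B) \<le> h (insert v A)" using anti AB by (meson insert_mono subset_insertI2)
      ultimately show "hy B \<le> hy A" unfolding hy_def using v
        by (intro add_mono mult_left_mono) auto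
    qed
    then have "multilinear_ext M hy y \<le> multilinear_ext M hy x"
      using insert.IH xy by auto
    also have "multilinear_ext M hy x \<le> multilinear_ext M hx x"
    proof (rule ml_fmono)
      fix A assume "A \<subseteq> M"
      then have "h (insert v A) \<le> h A" using anti by (meson insert_mono subset_insertI)
      then have "(y v - x v) * (h (insert v A) - h A) \<le> 0" using v
        by (intro mult_nonneg_nonpos) auto
      then show "hy A \<le> hx A" unfolding hy_def hx_def by (simp add: algebra_simps)
    next
      fix w assume "w \<in> M" then show "0 \<le> x w \<and> x w \<le> 1" using xy by force
    qed
    finally show "multilinear_ext (insert v M) h y \<le> multilinear_ext (insert v M) h x"
      using ml_insert[OF insert.hyps] unfolding hx_def hy_def by metis
  qed
qed

definition Dm :: "'a set \<Rightarrow> ('a set \<Rightarrow> real) \<Rightarrow> ('a \<Rightarrow> real) \<Rightarrow> 'a \<Rightarrow> real" where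
  "Dm N f x u = multilinear_ext N f (x(u:=1)) - multilinear_ext N f (x(u:=0))"

lemma Dm_eq:
  assumes "finite N" "u \<in> N"
  shows "Dm N f x u = multilinear_ext (N - {u}) (\<lambda>A. f (insert u A) - f A) x"
proof -
  have N: "N = insert u (N - {u})" using assms by auto
  have fin: "finite (N - {u})" using assms by simp
  have "multilinear_ext N f (x(u:=1)) = multilinear_ext (N - {u}) (\<lambda>A. f (insert u A)) (x(u:=1))"
    using ml_insert[OF fin, of u f "x(u:=1)"] N by simp
  also have "\<dots> = multilinear_ext (N - {u}) (\<lambda>A. f (insert u A)) x"
    by (rule ml_cong) auto
  finally have 1: "multilinear_ext N f (x(u:=1)) = multilinear_ext (N - {u}) (\<lambda>A. f (insert u A)) x" .
  have "multilinear_ext N f (x(u:=0)) = multilinear_ext (N - {u}) f (x(u:=0))"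
    using ml_insert[OF fin, of u f "x(u:=0)"] N by simp
  also have "\<dots> = multilinear_ext (N - {u}) f x"
    by (rule ml_cong) auto
  finally have 0: "multilinear_ext N f (x(u:=0)) = multilinear_ext (N - {u}) f x" .
  show ?thesis unfolding Dm_def 1 0 ml_diff ..
qed

lemma Dm_mono:
  assumes "finite N" "submodular_on N f" "u \<in> N"
    and "\<And>w. w \<in> N \<Longrightarrow> 0 \<le> x w \<and> x w \<le> y w \<and> y w \<le> 1"
  shows "Dm N f y u \<le> Dm N f x u"
proof -
  have anti: "\<forall>A B. A \<subseteq> B \<longrightarrow> B \<subseteq> N - {u} \<longrightarrow>
      (\<lambda>A. f (insert u A) - f A) B \<le> (\<lambda>A. f (insert u A) - f A) A"
  proof (intro allI impI)
    fix A B assume AB: "A \<subseteq> B" "B \<subseteq> N - {u}"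
    have "insert u A \<union> B = insert u B" "insert u A \<inter> B = A" using AB by auto
    moreover have "insert u A \<subseteq> N" "B \<subseteq> N" using AB assms(3) by auto
    ultimately have "f (insert u B) + f A \<le> f (insert u A) + f B"
      using assms(2) unfolding submodular_on_def by metis
    then show "(\<lambda>A. f (insert u A) - f A) B \<le> (\<lambda>A. f (insert u A) - f A) A" by simp
  qed
  have "multilinear_ext (N - {u}) (\<lambda>A. f (insert u A) - f A) y \<le> multilinear_ext (N - {u}) (\<lambda>A. f (insert u A) - f A) x"
    using ml_anti[of "N - {u}"] assms(1,4) anti by simp
  then show ?thesis using Dm_eq[OF assms(1,3)] by simp
qed

lemma partial_eq:
  assumes "u \<in> N" "\<And>w. w \<in> N \<Longrightarrow> 0 \<le> x w \<and> x w \<le> 1"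
  shows "partial_F N f x u = Dm N f x u"
proof -
  have "multilinear_ext N f (sup x (indicator {u})) = multilinear_ext N f (x(u:=1))"
    by (rule ml_cong) (use assms in \<open>auto simp: indicator_def sup_real_def\<close>)
  moreover have "multilinear_ext N f (inf x (indicator (N - {u}))) = multilinear_ext N f (x(u:=0))"
    by (rule ml_cong) (use assms in \<open>auto simp: indicator_def inf_real_def\<close>)
  ultimately show ?thesis unfolding partial_F_def Dm_def by simp
qed


lemma claim2:
  assumes "finite N" "submodular_on N f" "S \<subseteq> N"
    and "\<And>w. w \<in> N \<Longrightarrow> 0 \<le> x w \<and> x w \<le> 1" and "\<And>w. w \<in> S \<Longrightarrow> x w = 0"
  shows "multilinear_ext N f (\<lambda>v. x v + indicator S v) - multilinear_ext N f x \<le> (\<Sum>u\<in>S. Dm N f x u)"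
proof -
  have "finite S" using assms(1,3) finite_subset by auto
  then show ?thesis using assms(3,5)
  proof (induction S rule: finite_induct)
    case empty
    then show ?case by simp
  next
    case (insert v S)
    define z where "z = (\<lambda>w. x w + indicator S w)"
    have vN: "v \<in> N" using insert.prems by simp
    have xv: "x v = 0" using insert.prems by simp
    have zv: "z v = 0" unfolding z_def using xv insert.hyps by simp
    have xz: "0 \<le> x w \<and> x w \<le> z w \<and> z w \<le> 1" if "w \<in> N" for w
    proof (cases "w \<in> S")
      case True
      then have "x w = 0" using insert.prems(2) by blast
      then show ?thesis using True unfolding z_def by simp
    next
      case False
      then show ?thesis using assms(4)[OF that] unfolding z_def by simp
    qed
    have "multilinear_ext N f (\<lambda>w. x w + indicator (insert v S) w) = multilinear_ext N f (z(v:=1))"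
    proof (rule ml_cong)
      fix w assume "w \<in> N"
      show "x w + indicator (insert v S) w = (z(v:=1)) w"
      proof (cases "w = v")
        case True then show ?thesis using xv by simp
      next
        case False then show ?thesis unfolding z_def by (simp add: indicator_def)
      qed
    qed
    moreover have "z(v:=0) = z" using zv by (simp add: fun_upd_idem)
    ultimately have "multilinear_ext N f (\<lambda>w. x w + indicator (insert v S) w) - multilinear_ext N f z
        = Dm N f z v" unfolding Dm_def by simp
    also have "\<dots> \<le> Dm N f x v" by (rule Dm_mono[OF assms(1,2) vN xz])
    finally have 1: "multilinear_ext N f (\<lambda>w. x w + indicator (insert v S) w) - multilinear_ext N f z
        \<le> Dm N f x v" .
    have "S \<subseteq> N" "\<And>w. w \<in> S \<Longrightarrow> x w = 0" using insert.prems by auto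
    then have 2: "multilinear_ext N f z - multilinear_ext N f x \<le> (\<Sum>u\<in>S. Dm N f x u)"
      unfolding z_def by (rule insert.IH)
    show ?case using 1 2 insert.hyps by simp
  qed
qed

lemma norm1_nonneg_eq: "(\<And>w. 0 \<le> x w) \<Longrightarrow> norm1 N x = (\<Sum>w\<in>N. x w)"
  unfolding norm1_def by simp

lemma step_props:
  fixes f :: "'a set \<Rightarrow> real" and c \<tau> :: real
  assumes "finite N" "0 < p" "u \<in> N" "\<And>w. 0 \<le> xo w \<and> xo w \<le> p" "norm1 N xo \<le> real k" "xo u = 0"
  defines "x1 \<equiv> alg1_step N f k p c \<tau> xo u"
  shows "(\<forall>w. xo w \<le> x1 w \<and> x1 w \<le> p) \<and> norm1 N xo \<le> norm1 N x1 \<and> norm1 N x1 \<le> real k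
     \<and> (\<forall>w. w \<noteq> u \<longrightarrow> x1 w = xo w)
     \<and> (x1 u = 0 \<longrightarrow> norm1 N x1 < real k \<longrightarrow> partial_F N f xo u < c * \<tau> / real k)"
proof (cases "partial_F N f xo u \<ge> c * \<tau> / real k")
  case False
  then have "x1 = xo" unfolding x1_def alg1_step_def by simp
  then show ?thesis using assms(4,5) False by auto
next
  case True
  define a where "a = min p (real k - norm1 N xo)"
  have a0: "0 \<le> a" "a \<le> p" unfolding a_def using assms(2,5) by auto
  have x1: "x1 = (\<lambda>v. xo v + a * indicator {u} v)" unfolding x1_def alg1_step_def a_def using True by simp
  have nn: "\<And>w. 0 \<le> x1 w" unfolding x1 using assms(4) a0 by (simp add: indicator_def)
  have "norm1 N x1 = (\<Sum>w\<in>N. xo w + a * indicator {u} w)" using nn norm1_nonneg_eq x1 by metis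
  also have "\<dots> = (\<Sum>w\<in>N. xo w) + a * (\<Sum>w\<in>N. indicator {u} w)"
    by (simp add: sum.distrib sum_distrib_left)
  also have "(\<Sum>w\<in>N. indicator {u} w :: real) = 1" using assms(1,3) by (simp add: indicator_def of_bool_def sum.delta)
  finally have n1: "norm1 N x1 = norm1 N xo + a" using norm1_nonneg_eq[of xo N] assms(4) by simp
  have "\<forall>w. xo w \<le> x1 w \<and> x1 w \<le> p" unfolding x1 using assms(4,6) a0 by (auto simp: indicator_def)
  moreover have "norm1 N x1 \<le> real k" using n1 a_def by simp
  moreover have "x1 u = 0 \<longrightarrow> norm1 N x1 < real k \<longrightarrow> False"
    using n1 a_def assms(2,6) x1 by (auto simp: min_def split: if_splits)
  ultimately show ?thesis using n1 a0 x1 by auto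
qed

lemma fold_props:
  assumes "finite N" "0 < p"
  shows "distinct xs \<Longrightarrow> set xs \<subseteq> N \<Longrightarrow> (\<forall>w. 0 \<le> xo w \<and> xo w \<le> p) \<Longrightarrow> norm1 N xo \<le> real k
    \<Longrightarrow> (\<forall>w\<in>set xs. xo w = 0) \<Longrightarrow>
    (\<forall>w. xo w \<le> foldl (alg1_step N f k p c \<tau>) xo xs w \<and> foldl (alg1_step N f k p c \<tau>) xo xs w \<le> p)
    \<and> norm1 N xo \<le> norm1 N (foldl (alg1_step N f k p c \<tau>) xo xs)
    \<and> norm1 N (foldl (alg1_step N f k p c \<tau>) xo xs) \<le> real k
    \<and> (\<forall>u\<in>set xs. foldl (alg1_step N f k p c \<tau>) xo xs u = 0 \<longrightarrow>
         norm1 N (foldl (alg1_step N f k p c \<tau>) xo xs) < real k \<longrightarrow>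
         (\<exists>x'. (\<forall>w. 0 \<le> x' w \<and> x' w \<le> foldl (alg1_step N f k p c \<tau>) xo xs w)
              \<and> partial_F N f x' u < c * \<tau> / real k))"
proof (induction xs arbitrary: xo)
  case Nil
  then show ?case by simp
next
  case (Cons u xs)
  define x1 where "x1 = alg1_step N f k p c \<tau> xo u"
  define y where "y = foldl (alg1_step N f k p c \<tau>) x1 xs"
  have yeq: "foldl (alg1_step N f k p c \<tau>) xo (u # xs) = y" unfolding y_def x1_def by simp
  have uN: "u \<in> N" using Cons.prems by auto
  have S: "(\<forall>w. xo w \<le> x1 w \<and> x1 w \<le> p) \<and> norm1 N xo \<le> norm1 N x1 \<and> norm1 N x1 \<le> real k
     \<and> (\<forall>w. w \<noteq> u \<longrightarrow> x1 w = xo w)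
     \<and> (x1 u = 0 \<longrightarrow> norm1 N x1 < real k \<longrightarrow> partial_F N f xo u < c * \<tau> / real k)"
    unfolding x1_def using step_props[OF assms uN, where xo=xo and k=k and f=f and c=c and \<tau>=\<tau>] Cons.prems by auto
  have inv1: "\<forall>w. 0 \<le> x1 w \<and> x1 w \<le> p" using S Cons.prems(3) by (meson order_trans)
  have z1: "\<forall>w\<in>set xs. x1 w = 0" using S Cons.prems(1,5) by auto
  have IH: "(\<forall>w. x1 w \<le> y w \<and> y w \<le> p) \<and> norm1 N x1 \<le> norm1 N y \<and> norm1 N y \<le> real k
    \<and> (\<forall>u\<in>set xs. y u = 0 \<longrightarrow> norm1 N y < real k \<longrightarrow>
         (\<exists>x'. (\<forall>w. 0 \<le> x' w \<and> x' w \<le> y w) \<and> partial_F N f x' u < c * \<tau> / real k))"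
    unfolding y_def using Cons.IH[where xo=x1] Cons.prems S inv1 z1 by auto
  have last: "(\<exists>x'. (\<forall>w. 0 \<le> x' w \<and> x' w \<le> y w) \<and> partial_F N f x' u < c * \<tau> / real k)"
    if "y u = 0" "norm1 N y < real k"
  proof -
    have "x1 u = 0" using IH inv1 that(1) by (metis order_antisym)
    moreover have "norm1 N x1 < real k" using IH that(2) by linarith
    ultimately have "partial_F N f xo u < c * \<tau> / real k" using S by blast
    moreover have "\<forall>w. 0 \<le> xo w \<and> xo w \<le> y w" using S IH Cons.prems(3) by (meson order_trans)
    ultimately show ?thesis by blast
  qed
  have A1: "\<forall>w. xo w \<le> y w \<and> y w \<le> p" using IH S by (meson order_trans)
  have A2: "norm1 N xo \<le> norm1 N y" using IH S by linarith
  have A3: "norm1 N y \<le> real k" using IH by blast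
  have A4: "\<forall>u'\<in>set (u # xs). y u' = 0 \<longrightarrow> norm1 N y < real k \<longrightarrow>
         (\<exists>x'. (\<forall>w. 0 \<le> x' w \<and> x' w \<le> y w) \<and> partial_F N f x' u' < c * \<tau> / real k)"
  proof
    fix u' assume "u' \<in> set (u # xs)"
    then consider "u' = u" | "u' \<in> set xs" by auto
    then show "y u' = 0 \<longrightarrow> norm1 N y < real k \<longrightarrow>
         (\<exists>x'. (\<forall>w. 0 \<le> x' w \<and> x' w \<le> y w) \<and> partial_F N f x' u' < c * \<tau> / real k)"
    proof cases
      case 1 then show ?thesis using last by blast
    next
      case 2 then show ?thesis using IH by blast
    qed
  qed
  show ?case unfolding yeq using A1 A2 A3 A4 by blast
qed

theorem lemma3p5:
  fixes N :: "'a set" and f :: "'a set \<Rightarrow> real" and k :: nat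
    and p c \<tau> :: real and stream :: "'a list" and OPT :: "'a set"
  assumes "finite N"
    and "\<And>A. A \<subseteq> N \<Longrightarrow> f A \<ge> 0"
    and "submodular_on N f"
    and "k > 0"
    and "0 < p" and "p < 1" and "c > 0" and "\<tau> \<ge> 0"
    and "distinct stream" and "set stream = N"
    and "OPT \<subseteq> N" and "card OPT \<le> k"
    and "\<And>S. S \<subseteq> N \<Longrightarrow> card S \<le> k \<Longrightarrow> f S \<le> f OPT"
    and "norm1 N (alg1_x N f k p c \<tau> stream) < real k"
  shows "multilinear_ext N f (\<lambda>v. alg1_x N f k p c \<tau> stream v
            + indicator (OPT - supp N (alg1_x N f k p c \<tau> stream)) v)
         \<le> multilinear_ext N f (alg1_x N f k p c \<tau> stream) + c * \<tau>"
proof -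
  define x where "x = alg1_x N f k p c \<tau> stream"
  define S where "S = OPT - supp N x"
  have FP: "(\<forall>w. 0 \<le> x w \<and> x w \<le> p)
    \<and> (\<forall>u\<in>set stream. x u = 0 \<longrightarrow> norm1 N x < real k \<longrightarrow>
         (\<exists>x'. (\<forall>w. 0 \<le> x' w \<and> x' w \<le> x w) \<and> partial_F N f x' u < c * \<tau> / real k))"
  proof -
    have P: "distinct stream" "set stream \<subseteq> N" "\<forall>w. 0 \<le> (\<lambda>_. 0::real) w \<and> (\<lambda>_. 0::real) w \<le> p"
      "norm1 N (\<lambda>_. 0) \<le> real k" "\<forall>w\<in>set stream. (\<lambda>_. 0::real) w = 0"
      using assms(5,9,10) by (auto simp: norm1_def)
    note FP0 = fold_props[OF assms(1,5) P, where f=f and c=c and \<tau>=\<tau>]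
    have 1: "\<forall>w. 0 \<le> x w \<and> x w \<le> p" using conjunct1[OF FP0] unfolding x_def alg1_x_def by simp
    have 2: "\<forall>u\<in>set stream. x u = 0 \<longrightarrow> norm1 N x < real k \<longrightarrow>
         (\<exists>x'. (\<forall>w. 0 \<le> x' w \<and> x' w \<le> x w) \<and> partial_F N f x' u < c * \<tau> / real k)"
      using conjunct2[OF conjunct2[OF conjunct2[OF FP0]]] unfolding x_def alg1_x_def .
    show ?thesis using 1 2 by blast
  qed
  have x01: "0 \<le> x w \<and> x w \<le> 1" if "w \<in> N" for w
  proof -
    have "0 \<le> x w" "x w \<le> p" using FP by blast+
    then show ?thesis using assms(6) by linarith
  qed
  have SN: "S \<subseteq> N" unfolding S_def using assms(11) by auto
  have Sx: "x w = 0" if "w \<in> S" for w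
  proof -
    have "w \<in> N" "\<not> x w > 0" using that assms(11) unfolding S_def supp_def by auto
    moreover have "0 \<le> x w" using FP by blast
    ultimately show ?thesis by linarith
  qed
  have "multilinear_ext N f (\<lambda>v. x v + indicator S v) - multilinear_ext N f x \<le> (\<Sum>u\<in>S. Dm N f x u)"
    by (rule claim2[OF assms(1,3) SN x01 Sx])
  also have "\<dots> \<le> (\<Sum>u\<in>S. c * \<tau> / real k)"
  proof (rule sum_mono)
    fix u assume uS: "u \<in> S"
    then have uN: "u \<in> N" using SN by auto
    then obtain x' where x': "\<forall>w. 0 \<le> x' w \<and> x' w \<le> x w" "partial_F N f x' u < c * \<tau> / real k"
      using FP Sx[OF uS] assms(10,14) unfolding x_def by blast
    have "Dm N f x u \<le> Dm N f x' u"
      by (rule Dm_mono[OF assms(1,3) uN]) (use x' x01 in force)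
    also have "\<dots> = partial_F N f x' u"
      by (rule partial_eq[symmetric, OF uN]) (use x' x01 in \<open>meson order_trans\<close>)
    finally show "Dm N f x u \<le> c * \<tau> / real k" using x'(2) by simp
  qed
  also have "\<dots> = real (card S) * (c * \<tau> / real k)" by simp
  also have "\<dots> \<le> real k * (c * \<tau> / real k)"
  proof (rule mult_right_mono)
    have "finite OPT" using assms(11,1) finite_subset by blast
    then have "card S \<le> card OPT" unfolding S_def by (intro card_mono) auto
    then show "real (card S) \<le> real k" using assms(12) by simp
    show "0 \<le> c * \<tau> / real k" using assms(7,8) by simp
  qed
  also have "\<dots> = c * \<tau>" using assms(4) by simp
  finally show ?thesis unfolding x_def S_def by simp
qed

end
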